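(* Let $G$ be an additive group and let $(X,\rho)$ be the $\mathbb R$-tree described below. Then every point of $X$ is a point of valency $|G|+1$, i.e. for every $x\in X$ the set $X\setminus\{x\}$ has exactly $|G|+1$ connected components.
   Context: A function on an interval $(\alpha,\beta)$ is piecewise constant from the left if for every $x$ there is $\varepsilon>0$ with $f$ constant on $[x-\varepsilon,x]$. $X$ is the set of pairs $(f,a_f)$, $a_f>0$ real, $f:(a_f,+\infty)\to G$ piecewise constant from the left with $f|_{(b_f,+\infty)}\equiv0$ for some $b_f\ge a_f$. Order: $(f,a_f)\preceq(g,a_g)$ iff $a_f\le a_g$ and $f|_{(a_g,+\infty)}=g$; any two elements $p,q$ have a supremum $p\vee q$. Metric: $\rho((f,a_f),(g,a_g))=|a_f-a_g|$ if the pairs are comparable, and $\rho(p,q)=\rho(p,p\vee q)+\rho(p\vee q,q)$ otherwise. $|G|$ is the cardinality of $G$. *)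

theory Defs
  imports "HOL-Analysis.Analysis" "HOL-Library.Equipollence"
begin

text \<open>A point (f, a_f) is represented as a pair (f, a) with f :: real => 'g;
  the values of f outside the domain (a, +infinity) are normalised to 0,
  so that each point of the paper corresponds to exactly one pair.\<close>

definition pc_left :: "real \<Rightarrow> (real \<Rightarrow> 'g) \<Rightarrow> bool" where
  "pc_left a f \<longleftrightarrow> (\<forall>x>a. \<exists>\<epsilon>>0. x - \<epsilon> > a \<and> (\<forall>y\<in>{x-\<epsilon>..x}. f y = f x))"

definition Xspace :: "((real \<Rightarrow> 'g::zero) \<times> real) set" where
  "Xspace = {(f, a). a > 0 \<and> (\<forall>x. x \<le> a \<longrightarrow> f x = 0) \<and> pc_left a f
              \<and> (\<exists>b\<ge>a. \<forall>x>b. f x = 0)}"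

definition tle :: "((real \<Rightarrow> 'g::zero) \<times> real) \<Rightarrow> ((real \<Rightarrow> 'g) \<times> real) \<Rightarrow> bool" where
  "tle p q \<longleftrightarrow> snd p \<le> snd q \<and> (\<forall>x>snd q. fst p x = fst q x)"

definition tjoin :: "((real \<Rightarrow> 'g::zero) \<times> real) \<Rightarrow> ((real \<Rightarrow> 'g) \<times> real) \<Rightarrow> ((real \<Rightarrow> 'g) \<times> real)" where
  "tjoin p q = (THE s. s \<in> Xspace \<and> tle p s \<and> tle q s \<and>
                   (\<forall>t\<in>Xspace. tle p t \<and> tle q t \<longrightarrow> tle s t))"

definition trho :: "((real \<Rightarrow> 'g::zero) \<times> real) \<Rightarrow> ((real \<Rightarrow> 'g) \<times> real) \<Rightarrow> real" where
  "trho p q = (if tle p q \<or> tle q p then \<bar>snd p - snd q\<bar>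
               else \<bar>snd p - snd (tjoin p q)\<bar> + \<bar>snd (tjoin p q) - snd q\<bar>)"

definition Xtop :: "((real \<Rightarrow> 'g::zero) \<times> real) topology" where
  "Xtop = Metric_space.mtopology Xspace trho"

end

theory Submission
  imports Defs
begin


lemma Xspace_iff:
  "p \<in> Xspace \<longleftrightarrow> snd p > 0 \<and> (\<forall>y. y \<le> snd p \<longrightarrow> fst p y = 0) \<and> pc_left (snd p) (fst p)
     \<and> (\<exists>b\<ge>snd p. \<forall>y>b. fst p y = 0)"
  by (cases p) (simp add: Xspace_def)

lemma tle_refl: "tle p p" by (simp add: tle_def)

lemma tle_trans: "tle p q \<Longrightarrow> tle q r \<Longrightarrow> tle p r"
  unfolding tle_def by force

lemma tle_chain: "tle p s \<Longrightarrow> tle p t \<Longrightarrow> snd s \<le> snd t \<Longrightarrow> tle s t"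
  unfolding tle_def by force

lemma tle_eq_level:
  assumes "p \<in> Xspace" "q \<in> Xspace" "tle p q" "snd q \<le> snd p"
  shows "p = q"
proof -
  have e: "snd p = snd q" using assms(3,4) by (simp add: tle_def)
  have "fst p y = fst q y" for y
  proof (cases "y > snd q")
    case True then show ?thesis using assms(3) by (simp add: tle_def)
  next
    case False then show ?thesis using assms(1,2) e by (simp add: Xspace_iff)
  qed
  then have "fst p = fst q" by auto
  with e show ?thesis by (simp add: prod_eq_iff)
qed

lemma tle_antisym: assumes "p \<in> Xspace" "q \<in> Xspace" "tle p q" "tle q p" shows "p = q"
  using tle_eq_level[OF assms(1,2,3)] assms(4) unfolding tle_def by blast

definition up :: "((real \<Rightarrow> 'g::zero) \<times> real) \<Rightarrow> real \<Rightarrow> ((real \<Rightarrow> 'g) \<times> real)" where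
  "up p t = ((\<lambda>y. if y > t then fst p y else 0), t)"

lemma snd_up [simp]: "snd (up p t) = t" by (simp add: up_def)
lemma fst_up: "fst (up p t) y = (if y > t then fst p y else 0)" by (simp add: up_def)

lemma up_in:
  assumes p: "p \<in> Xspace" and t: "snd p \<le> t"
  shows "up p t \<in> Xspace"
proof -
  from p have pos: "snd p > 0" and pc: "pc_left (snd p) (fst p)" and "\<exists>b\<ge>snd p. \<forall>y>b. fst p y = 0"
    unfolding Xspace_iff by blast+
  then obtain b where b: "b \<ge> snd p" "\<forall>y>b. fst p y = 0" by blast
  have pc': "pc_left t (fst (up p t))"
    unfolding pc_left_def
  proof (intro allI impI)
    fix y assume y: "y > t"
    then have "y > snd p" using t by linarith
    then obtain e where e: "e > 0" "y - e > snd p" "\<forall>z\<in>{y-e..y}. fst p z = fst p y"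
      using pc unfolding pc_left_def by blast
    define e' where "e' = min e ((y - t)/2)"
    have "e' > 0" using e y by (simp add: e'_def)
    moreover have "y - e' > t"
    proof -
      have "e' \<le> (y - t)/2" unfolding e'_def by (rule min.cobounded2)
      then have "2 * e' \<le> y - t" by (simp add: field_simps)
      then show ?thesis using y by linarith
    qed
    moreover have "\<forall>z\<in>{y-e'..y}. fst (up p t) z = fst (up p t) y"
    proof
      fix z assume z: "z \<in> {y-e'..y}"
      then have "z > t" using \<open>y - e' > t\<close> by simp
      have "e' \<le> e" unfolding e'_def by (rule min.cobounded1)
      then have "z \<in> {y-e..y}" using z by simp
      then have "fst p z = fst p y" using e(3) by blast
      then show "fst (up p t) z = fst (up p t) y" using \<open>z > t\<close> y by (simp add: fst_up)
    qed
    ultimately show "\<exists>\<epsilon>>0. y - \<epsilon> > t \<and> (\<forall>z\<in>{y-\<epsilon>..y}. fst (up p t) z = fst (up p t) y)" by blast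
  qed
  have z1: "\<forall>y. y \<le> snd (up p t) \<longrightarrow> fst (up p t) y = 0" by (simp add: fst_up)
  have z2: "\<exists>b'\<ge>snd (up p t). \<forall>y>b'. fst (up p t) y = 0"
    using b by (intro exI[of _ "max b t"]) (simp add: fst_up)
  have "snd (up p t) > 0" using pos t by simp
  then show ?thesis unfolding Xspace_iff using z1 z2 pc' by simp
qed

lemma tle_up: "snd p \<le> t \<Longrightarrow> tle p (up p t)"
  by (simp add: tle_def fst_up)

lemma up_self: "s \<in> Xspace \<Longrightarrow> tle p s \<Longrightarrow> up p (snd s) = s"
  by (auto simp: up_def tle_def Xspace_iff prod_eq_iff)

lemma trho_up: "trho (up p t) (up p t') = \<bar>t - t'\<bar>"
proof -
  have "tle (up p t) (up p t') \<or> tle (up p t') (up p t)"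
    by (cases "t \<le> t'") (auto simp: tle_def fst_up)
  then show ?thesis by (simp add: trho_def)
qed

lemma join_ex:
  assumes p: "p \<in> Xspace" and q: "q \<in> Xspace"
  shows "\<exists>s\<in>Xspace. tle p s \<and> tle q s \<and> (\<forall>t\<in>Xspace. tle p t \<and> tle q t \<longrightarrow> tle s t)"
proof -
  from p obtain bp where bp: "bp \<ge> snd p" "\<forall>y>bp. fst p y = 0" by (auto simp: Xspace_iff)
  from q obtain bq where bq: "bq \<ge> snd q" "\<forall>y>bq. fst q y = 0" by (auto simp: Xspace_iff)
  define S where "S = {t. max (snd p) (snd q) \<le> t \<and> (\<forall>y>t. fst p y = fst q y)}"
  have ne: "max bp bq \<in> S" using bp bq by (auto simp: S_def)
  have bdd: "bdd_below S" unfolding S_def bdd_below_def by auto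
  define m where "m = Inf S"
  have agree: "\<forall>y>m. fst p y = fst q y"
  proof (intro allI impI)
    fix y assume "y > m"
    then obtain t where "t \<in> S" "t < y" using cInf_less_iff[of S y] ne bdd m_def by blast
    then show "fst p y = fst q y" by (auto simp: S_def)
  qed
  have mge: "max (snd p) (snd q) \<le> m" unfolding m_def
    by (rule cInf_greatest) (use ne in \<open>auto simp: S_def\<close>)
  define s where "s = up p m"
  have "s \<in> Xspace" unfolding s_def by (rule up_in[OF p]) (use mge in auto)
  moreover have "tle p s" unfolding s_def using mge by (intro tle_up) auto
  moreover have "tle q s" using agree mge by (auto simp: tle_def s_def fst_up)
  moreover have "\<forall>t\<in>Xspace. tle p t \<and> tle q t \<longrightarrow> tle s t"
  proof (intro ballI impI)
    fix t assume t: "t \<in> Xspace" "tle p t \<and> tle q t"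
    then have "snd t \<in> S" by (auto simp: S_def tle_def)
    then have "m \<le> snd t" unfolding m_def using bdd by (rule cInf_lower)
    then show "tle s t" using t by (auto simp: tle_def s_def fst_up)
  qed
  ultimately show ?thesis by blast
qed

definition isjoin where
  "isjoin p q s \<longleftrightarrow> s \<in> Xspace \<and> tle p s \<and> tle q s \<and> (\<forall>t\<in>Xspace. tle p t \<and> tle q t \<longrightarrow> tle s t)"

lemma isjoin_unique: "isjoin p q s \<Longrightarrow> isjoin p q s' \<Longrightarrow> s = s'"
  unfolding isjoin_def by (meson tle_antisym)

lemma tjoin_eq: "isjoin p q s \<Longrightarrow> tjoin p q = s"
  unfolding tjoin_def using isjoin_unique unfolding isjoin_def
  by (rule_tac the_equality) blast+

lemma tjoin_isjoin: "p \<in> Xspace \<Longrightarrow> q \<in> Xspace \<Longrightarrow> isjoin p q (tjoin p q)"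
  using join_ex[of p q] tjoin_eq unfolding isjoin_def by metis

lemma tjoin_props:
  assumes "p \<in> Xspace" "q \<in> Xspace"
  shows "tjoin p q \<in> Xspace" "tle p (tjoin p q)" "tle q (tjoin p q)"
    "\<And>t. t \<in> Xspace \<Longrightarrow> tle p t \<Longrightarrow> tle q t \<Longrightarrow> tle (tjoin p q) t"
  using tjoin_isjoin[OF assms] unfolding isjoin_def by auto

lemma tle_snd: "tle p q \<Longrightarrow> snd p \<le> snd q" by (simp add: tle_def)

lemma trho_formula:
  assumes p: "p \<in> Xspace" and q: "q \<in> Xspace"
  shows "trho p q = 2 * snd (tjoin p q) - snd p - snd q"
proof (cases "tle p q \<or> tle q p")
  case True
  then show ?thesis
  proof
    assume h: "tle p q"
    have "isjoin p q q" using h q by (auto simp: isjoin_def tle_refl)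
    then have "tjoin p q = q" by (rule tjoin_eq)
    then show ?thesis using h tle_snd[OF h] by (simp add: trho_def)
  next
    assume h: "tle q p"
    have "isjoin p q p" using h p by (auto simp: isjoin_def tle_refl)
    then have "tjoin p q = p" by (rule tjoin_eq)
    then show ?thesis using h tle_snd[OF h] by (simp add: trho_def)
  qed
next
  case False
  have "snd p \<le> snd (tjoin p q)" "snd q \<le> snd (tjoin p q)"
    using tjoin_props[OF p q] tle_snd by blast+
  then have "\<bar>snd p - snd (tjoin p q)\<bar> = snd (tjoin p q) - snd p"
    "\<bar>snd (tjoin p q) - snd q\<bar> = snd (tjoin p q) - snd q" by linarith+
  moreover have "trho p q = \<bar>snd p - snd (tjoin p q)\<bar> + \<bar>snd (tjoin p q) - snd q\<bar>"
    unfolding trho_def by (rule if_not_P[OF False])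
  ultimately have "trho p q = (snd (tjoin p q) - snd p) + (snd (tjoin p q) - snd q)" by (simp only:)
  then show ?thesis by simp
qed

lemma tjoin_commute: "tjoin p q = tjoin q p"
proof -
  have e: "(\<lambda>s. s \<in> Xspace \<and> tle p s \<and> tle q s \<and> (\<forall>t\<in>Xspace. tle p t \<and> tle q t \<longrightarrow> tle s t)) =
     (\<lambda>s. s \<in> Xspace \<and> tle q s \<and> tle p s \<and> (\<forall>t\<in>Xspace. tle q t \<and> tle p t \<longrightarrow> tle s t))" by (rule ext) blast
  show ?thesis unfolding tjoin_def e ..
qed

lemma trho_nonneg: "0 \<le> trho p q"
  unfolding trho_def by (cases "tle p q \<or> tle q p") (simp_all only: if_True if_False abs_ge_zero add_nonneg_nonneg)

lemma trho_commute: "trho p q = trho q p"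
proof -
  have d: "(tle p q \<or> tle q p) = (tle q p \<or> tle p q)" by blast
  show ?thesis
  proof (cases "tle q p \<or> tle p q")
    case True
    then show ?thesis unfolding trho_def d using abs_minus_commute by simp
  next
    case False
    have "\<bar>snd p - snd (tjoin q p)\<bar> + \<bar>snd (tjoin q p) - snd q\<bar> = \<bar>snd q - snd (tjoin q p)\<bar> + \<bar>snd (tjoin q p) - snd p\<bar>"
      by arith
    then show ?thesis unfolding trho_def d tjoin_commute[of p q] using False by simp
  qed
qed

lemma trho_zero:
  assumes xy: "x \<in> Xspace" "y \<in> Xspace" and h: "trho x y = 0"
  shows "x = y"
proof -
  let ?s = "tjoin x y"
  note j = tjoin_props[OF xy]
  have a: "snd x \<le> snd ?s" "snd y \<le> snd ?s" using j(2,3) by (simp_all add: tle_snd)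
  have f: "trho x y = 2 * snd ?s - snd x - snd y" by (rule trho_formula[OF xy])
  have "snd ?s \<le> snd x" "snd ?s \<le> snd y" using a f h by linarith+
  then have "x = ?s" "y = ?s" using tle_eq_level[OF xy(1) j(1) j(2)] tle_eq_level[OF xy(2) j(1) j(3)] by blast+
  then show "x = y" by simp
qed

lemma trho_triangle:
  assumes that: "x \<in> Xspace" "y \<in> Xspace" "z \<in> Xspace"
  shows "trho x z \<le> trho x y + trho y z"
proof -
  let ?s1 = "tjoin x y" and ?s2 = "tjoin y z" and ?s3 = "tjoin x z"
  note j1 = tjoin_props[OF that(1,2)] and j2 = tjoin_props[OF that(2,3)] and j3 = tjoin_props[OF that(1,3)]
  have key: "snd ?s3 + snd y \<le> snd ?s1 + snd ?s2"
  proof (cases "snd ?s1 \<le> snd ?s2")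
    case True
    then have "tle ?s1 ?s2" using tle_chain j1(3) j2(2) by blast
    then have "tle x ?s2" using j1(2) tle_trans by blast
    then have "tle ?s3 ?s2" using j3(4) j2(1) j2(3) by blast
    then have "snd ?s3 \<le> snd ?s2" "snd y \<le> snd ?s1" using tle_snd j1(3) by blast+
    then show ?thesis by linarith
  next
    case False
    then have "snd ?s2 \<le> snd ?s1" by linarith
    then have "tle ?s2 ?s1" using tle_chain j1(3) j2(2) by blast
    then have "tle z ?s1" using j2(3) tle_trans by blast
    then have "tle ?s3 ?s1" using j3(4) j1(1) j1(2) by blast
    then have "snd ?s3 \<le> snd ?s1" "snd y \<le> snd ?s2" using tle_snd j2(2) by blast+
    then show ?thesis by linarith
  qed
  have "trho x z = 2 * snd ?s3 - snd x - snd z" by (rule trho_formula[OF that(1,3)])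
  moreover have "trho x y = 2 * snd ?s1 - snd x - snd y" by (rule trho_formula[OF that(1,2)])
  moreover have "trho y z = 2 * snd ?s2 - snd y - snd z" by (rule trho_formula[OF that(2,3)])
  ultimately show ?thesis using key by linarith
qed

lemma metric: "Metric_space Xspace trho"
proof (rule Metric_space.intro)
  show "0 \<le> trho x y" for x y :: "(real \<Rightarrow> 'a) \<times> real" by (rule trho_nonneg)
  show "trho x y = trho y x" for x y :: "(real \<Rightarrow> 'a) \<times> real" by (rule trho_commute)
  show "trho x z \<le> trho x y + trho y z" if "x \<in> Xspace" "y \<in> Xspace" "z \<in> Xspace"
    for x y z :: "(real \<Rightarrow> 'a) \<times> real" using that by (rule trho_triangle)
  show "(trho x y = 0) = (x = y)" if "x \<in> Xspace" "y \<in> Xspace" for x y :: "(real \<Rightarrow> 'a) \<times> real"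
  proof
    assume "trho x y = 0" then show "x = y" using trho_zero that by blast
  next
    assume "x = y" then show "trho x y = 0" by (simp add: trho_def tle_refl)
  qed
qed



lemma components_partition:
  assumes conn: "\<And>C. C \<in> F \<Longrightarrow> connectedin X C"
      and op: "\<And>C. C \<in> F \<Longrightarrow> openin X C"
      and cov: "\<Union>F = topspace X"
      and ne: "\<And>C. C \<in> F \<Longrightarrow> C \<noteq> {}"
      and dis: "\<And>C D. C \<in> F \<Longrightarrow> D \<in> F \<Longrightarrow> C \<noteq> D \<Longrightarrow> C \<inter> D = {}"
  shows "connected_components_of X = F"
proof -
  have cl: "closedin X C" if "C \<in> F" for C
  proof -
    have "topspace X - C = \<Union>(F - {C})" using cov dis that by blast
    moreover have "openin X (\<Union>(F - {C}))" using op by blast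
    moreover have "C \<subseteq> topspace X" using cov that by blast
    ultimately show ?thesis by (simp add: closedin_def)
  qed
  have comp: "connected_component_of_set X z = C" if "C \<in> F" "z \<in> C" for C z
  proof
    show "C \<subseteq> connected_component_of_set X z"
      by (rule connected_component_of_maximal[OF conn[OF that(1)] that(2)])
    have "connectedin X (connected_component_of_set X z)" by (rule connectedin_connected_component_of)
    then have "connected_component_of_set X z \<subseteq> C \<or> disjnt (connected_component_of_set X z) C"
      using connectedin_clopen_cases cl op that(1) by blast
    moreover have "z \<in> topspace X" using cov that by blast
    then have "z \<in> connected_component_of_set X z" by (simp add: connected_component_of_refl)
    ultimately show "connected_component_of_set X z \<subseteq> C" using that(2) by (auto simp: disjnt_def)
  qed
  show ?thesis
    unfolding connected_components_of_def
  proof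
    show "connected_component_of_set X ` topspace X \<subseteq> F"
    proof
      fix K assume "K \<in> connected_component_of_set X ` topspace X"
      then obtain z where z: "z \<in> topspace X" "K = connected_component_of_set X z" by blast
      then obtain C where "C \<in> F" "z \<in> C" using cov by blast
      then show "K \<in> F" using comp z by blast
    qed
    show "F \<subseteq> connected_component_of_set X ` topspace X"
    proof
      fix C assume C: "C \<in> F"
      then obtain z where "z \<in> C" using ne by blast
      then have "z \<in> topspace X" "connected_component_of_set X z = C" using comp C cov by blast+
      then show "C \<in> connected_component_of_set X ` topspace X" by (metis imageI)
    qed
  qed
qed

interpretation XM: Metric_space Xspace trho by (rule metric)

lemma Xtop_eq: "Xtop = XM.mtopology" by (simp add: Xtop_def)

lemma topspace_Xtop [simp]: "topspace Xtop = Xspace" by (simp add: Xtop_eq)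

lemma openin_Xtop: "openin Xtop U \<longleftrightarrow> U \<subseteq> Xspace \<and> (\<forall>x. x \<in> U \<longrightarrow> (\<exists>r>0. XM.mball x r \<subseteq> U))"
  by (simp add: Xtop_eq XM.openin_mtopology)

lemma cont_up:
  assumes p: "p \<in> Xspace"
  shows "continuous_map (top_of_set {snd p..}) Xtop (up p)"
  unfolding Xtop_eq XM.continuous_map_to_metric
proof (intro ballI allI impI)
  fix t and e :: real assume t: "t \<in> topspace (top_of_set {snd p..})" and e: "e > 0"
  have t': "snd p \<le> t" using t by simp
  let ?U = "{snd p..} \<inter> ball t e"
  have "openin (top_of_set {snd p..}) ?U" by (rule openin_open_Int) simp
  moreover have "t \<in> ?U" using t' e by simp
  moreover have "\<forall>y\<in>?U. up p y \<in> XM.mball (up p t) e"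
  proof
    fix y assume y: "y \<in> ?U"
    then have "snd p \<le> y" "dist t y < e" by auto
    then show "up p y \<in> XM.mball (up p t) e"
      using up_in[OF p] t' by (simp add: trho_up dist_real_def)
  qed
  ultimately show "\<exists>U. openin (top_of_set {snd p..}) U \<and> t \<in> U \<and> (\<forall>y\<in>U. up p y \<in> XM.mball (up p t) e)"
    by blast
qed

lemma conn_up:
  assumes p: "p \<in> Xspace" and I: "I \<subseteq> {snd p..}" "connected I"
  shows "connectedin Xtop (up p ` I)"
proof (rule connectedin_continuous_map_image[OF cont_up[OF p]])
  show "connectedin (top_of_set {snd p..}) I" using I by (simp add: connectedin_subtopology)
qed



theorem lemma6:
  fixes x :: "(real \<Rightarrow> 'g::ab_group_add) \<times> real"
  assumes "x \<in> Xspace"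
  shows "connected_components_of (subtopology Xtop (Xspace - {x})) \<approx> (UNIV :: 'g option set)"
proof -
  note xX = assms
  define a where "a = snd x"
  define f where "f = fst x"
  have sx: "snd x = a" "fst x = f" by (simp_all add: a_def f_def)
  have a0: "a > 0" and fz: "\<forall>y. y \<le> a \<longrightarrow> f y = 0" and pcf: "pc_left a f"
    and "\<exists>b\<ge>a. \<forall>y>b. f y = 0"
    using xX unfolding Xspace_iff a_def f_def by blast+
  then obtain bf where bf: "bf \<ge> a" "\<forall>y>bf. f y = 0" by blast
  define D where "D v = {q \<in> Xspace. tle q x \<and> snd q < a \<and> fst q a = v}" for v
  define U where "U = {q \<in> Xspace. \<not> tle q x}"
  define w :: "'g \<Rightarrow> (real \<Rightarrow> 'g) \<times> real"
    where "w v = ((\<lambda>y. if y > a then f y else if y > a/2 then v else 0), a/2)" for v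
  define F where "F = insert U (range D)"
  have w_in: "w v \<in> Xspace" for v
  proof -
    have sw: "snd (w v) = a/2" by (simp add: w_def)
    have pcw: "pc_left (snd (w v)) (fst (w v))" unfolding sw pc_left_def
    proof (intro allI impI)
      fix y assume y: "y > a/2"
      show "\<exists>\<epsilon>>0. y - \<epsilon> > a/2 \<and> (\<forall>z\<in>{y-\<epsilon>..y}. fst (w v) z = fst (w v) y)"
      proof (cases "y > a")
        case True
        then obtain e where e: "e>0" "y - e > a" "\<forall>z\<in>{y-e..y}. f z = f y"
          using pcf unfolding pc_left_def by blast
        have "y - e > a/2" using e(2) a0 by linarith
        moreover have "\<forall>z\<in>{y-e..y}. fst (w v) z = fst (w v) y"
        proof
          fix z assume z: "z \<in> {y-e..y}"
          then have "z > a" using e(2) by simp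
          moreover have "f z = f y" using e(3) z by blast
          ultimately show "fst (w v) z = fst (w v) y" using True by (simp add: w_def)
        qed
        ultimately show ?thesis using e(1) by blast
      next
        case False
        define e where "e = (y - a/2)/2"
        have e0: "e > 0" using y by (simp add: e_def)
        have e1: "y - e > a/2" using y by (simp add: e_def field_simps)
        have "\<forall>z\<in>{y-e..y}. fst (w v) z = fst (w v) y"
        proof
          fix z assume z: "z \<in> {y-e..y}"
          then have "z > a/2" "\<not> z > a" using e1 False by auto
          then show "fst (w v) z = fst (w v) y" using False y by (simp add: w_def)
        qed
        then show ?thesis using e0 e1 by blast
      qed
    qed
    have "\<forall>y. y \<le> snd (w v) \<longrightarrow> fst (w v) y = 0" using a0 by (auto simp: w_def)
    moreover have "\<exists>b\<ge>snd (w v). \<forall>y>b. fst (w v) y = 0"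
    proof (intro exI[of _ bf] conjI allI impI)
      show "snd (w v) \<le> bf" using bf a0 by (simp add: w_def)
      fix y assume "y > bf"
      then show "fst (w v) y = 0" using bf by (simp add: w_def)
    qed
    moreover have "snd (w v) > 0" using a0 by (simp add: w_def)
    ultimately show ?thesis using pcw unfolding Xspace_iff by blast
  qed
  have w_D: "w v \<in> D v" for v
  proof -
    have "tle (w v) x" unfolding tle_def sx using a0 by (simp add: w_def)
    moreover have "snd (w v) < a" using a0 by (simp add: w_def)
    moreover have "fst (w v) a = v" using a0 by (simp add: w_def)
    ultimately show ?thesis using w_in unfolding D_def by blast
  qed
  have uU: "up x (a+1) \<in> U"
  proof -
    have "up x (a+1) \<in> Xspace" using up_in[OF xX] sx by simp
    moreover have "\<not> tle (up x (a+1)) x" using tle_snd sx by fastforce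
    ultimately show ?thesis unfolding U_def by blast
  qed
  have DU: "D v \<inter> U = {}" for v
    unfolding D_def U_def by blast
  have DD: "D v \<inter> D v' = {}" if "v \<noteq> v'" for v v'
    unfolding D_def using that by blast
  have cover: "\<Union>F = Xspace - {x}"
  proof
    show "\<Union>F \<subseteq> Xspace - {x}"
    proof
      fix q assume "q \<in> \<Union>F"
      then obtain C where C: "C \<in> F" "q \<in> C" by blast
      show "q \<in> Xspace - {x}"
      proof (cases "C = U")
        case True
        then show ?thesis using C tle_refl[of x] unfolding U_def by blast
      next
        case False
        then obtain v where "C = D v" using C(1) unfolding F_def by blast
        then show ?thesis using C sx unfolding D_def by force
      qed
    qed
    show "Xspace - {x} \<subseteq> \<Union>F"
    proof
      fix q assume q: "q \<in> Xspace - {x}"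
      show "q \<in> \<Union>F"
      proof (cases "tle q x")
        case True
        have "snd q < a"
        proof (rule ccontr)
          assume "\<not> snd q < a"
          then have "q = x" using tle_eq_level[of q x] q True sx xX by simp
          then show False using q by blast
        qed
        then have "q \<in> D (fst q a)" using q True unfolding D_def by blast
        then show ?thesis unfolding F_def by blast
      next
        case False
        then show ?thesis using q unfolding F_def U_def by blast
      qed
    qed
  qed
  have D_open: "openin Xtop (D v)" for v
    unfolding openin_Xtop
  proof (intro conjI allI impI)
    show "D v \<subseteq> Xspace" unfolding D_def by blast
    fix q assume q: "q \<in> D v"
    then have qX: "q \<in> Xspace" and qx: "tle q x" and qa: "snd q < a" and qv: "fst q a = v"
      unfolding D_def by blast+
    have "XM.mball q (a - snd q) \<subseteq> D v"
    proof
      fix p assume "p \<in> XM.mball q (a - snd q)"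
      then have pX: "p \<in> Xspace" and d: "trho q p < a - snd q" by auto
      let ?s = "tjoin q p"
      note j = tjoin_props[OF qX pX]
      have fo: "trho q p = 2 * snd ?s - snd q - snd p" by (rule trho_formula[OF qX pX])
      have "snd p \<le> snd ?s" using j(3) by (rule tle_snd)
      then have sa: "snd ?s < a" using fo d by linarith
      have "tle ?s x" using tle_chain[OF j(2) qx] sa sx by simp
      then have px: "tle p x" using j(3) tle_trans by blast
      have "fst p a = fst ?s a" using j(3) sa unfolding tle_def by blast
      also have "\<dots> = fst q a" using j(2) sa unfolding tle_def by force
      finally have "fst p a = v" using qv by simp
      moreover have "snd p < a" using \<open>snd p \<le> snd ?s\<close> sa by linarith
      ultimately show "p \<in> D v" using pX px unfolding D_def by blast
    qed
    moreover have "a - snd q > 0" using qa by simp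
    ultimately show "\<exists>r>0. XM.mball q r \<subseteq> D v" by blast
  qed
  have U_open: "openin Xtop U"
    unfolding openin_Xtop
  proof (intro conjI allI impI)
    show "U \<subseteq> Xspace" unfolding U_def by blast
    fix q assume q: "q \<in> U"
    then have qX: "q \<in> Xspace" and qx: "\<not> tle q x" unfolding U_def by blast+
    have "q \<noteq> x" using qx tle_refl by blast
    then have r0: "trho q x > 0" using XM.mdist_pos_less qX xX by blast
    have "XM.mball q (trho q x) \<subseteq> U"
    proof
      fix p assume "p \<in> XM.mball q (trho q x)"
      then have pX: "p \<in> Xspace" and d: "trho q p < trho q x" by auto
      have "\<not> tle p x"
      proof
        assume px: "tle p x"
        let ?t = "tjoin q p" and ?s = "tjoin q x"
        note jt = tjoin_props[OF qX pX] and js = tjoin_props[OF qX xX]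
        have "\<not> snd ?t \<le> snd x"
        proof
          assume "snd ?t \<le> snd x"
          then have "tle ?t x" using tle_chain[OF jt(3) px] by blast
          then show False using jt(2) tle_trans qx by blast
        qed
        then have "tle x ?t" using tle_chain[OF px jt(3)] by simp
        then have "tle ?s ?t" using js(4) jt(1) jt(2) by blast
        then have "snd ?s \<le> snd ?t" by (rule tle_snd)
        moreover have "snd p \<le> snd x" using px by (rule tle_snd)
        moreover have "trho q p = 2 * snd ?t - snd q - snd p" by (rule trho_formula[OF qX pX])
        moreover have "trho q x = 2 * snd ?s - snd q - snd x" by (rule trho_formula[OF qX xX])
        ultimately show False using d by linarith
      qed
      then show "p \<in> U" using pX unfolding U_def by blast
    qed
    then show "\<exists>r>0. XM.mball q r \<subseteq> U" using r0 by blast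
  qed
  have D_conn: "connectedin Xtop (D v)" for v
  proof -
    define C where "C (q :: (real \<Rightarrow> 'g) \<times> real) = up q ` {snd q..<a}" for q
    have Csub: "C q \<subseteq> D v" if q: "q \<in> D v" for q
    proof
      fix r assume "r \<in> C q"
      then obtain t where t: "t \<in> {snd q..<a}" "r = up q t" unfolding C_def by blast
      have qX: "q \<in> Xspace" and qx: "tle q x" and qv: "fst q a = v" using q unfolding D_def by blast+
      have "r \<in> Xspace" using up_in[OF qX] t by simp
      moreover have "tle r x"
        unfolding tle_def
      proof (intro conjI allI impI)
        show "snd r \<le> snd x" using t sx by simp
        fix y assume "y > snd x"
        then show "fst r y = fst x y" using qx t sx unfolding tle_def by (simp add: fst_up)
      qed
      moreover have "snd r < a" using t by simp
      moreover have "fst r a = v" using t qv by (simp add: fst_up)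
      ultimately show "r \<in> D v" unfolding D_def by blast
    qed
    have Cconn: "connectedin Xtop (C q)" if q: "q \<in> D v" for q
      unfolding C_def by (rule conn_up) (use q in \<open>auto simp: D_def\<close>)
    have wC: "w v \<in> C (w v)"
    proof -
      have "up (w v) (snd (w v)) = w v" by (rule up_self[OF w_in tle_refl])
      moreover have "snd (w v) \<in> {snd (w v)..<a}" using a0 by (simp add: w_def)
      ultimately show ?thesis unfolding C_def by (metis imageI)
    qed
    have qC: "q \<in> C q" if q: "q \<in> D v" for q
    proof -
      have "up q (snd q) = q" by (rule up_self) (use q in \<open>auto simp: D_def tle_refl\<close>)
      moreover have "snd q \<in> {snd q..<a}" using q by (simp add: D_def)
      ultimately show ?thesis unfolding C_def by (metis imageI)
    qed
    have meet: "C q \<inter> C (w v) \<noteq> {}" if q: "q \<in> D v" for q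
    proof -
      have qX: "q \<in> Xspace" and qx: "tle q x" and qa: "snd q < a" and qv: "fst q a = v"
        using q unfolding D_def by blast+
      have "pc_left (snd q) (fst q)" using qX unfolding Xspace_iff by blast
      then obtain e where e: "e > 0" "a - e > snd q" "\<forall>z\<in>{a-e..a}. fst q z = fst q a"
        using qa unfolding pc_left_def by blast
      define t where "t = max (a - e) (a/2)"
      have t1: "t \<ge> a - e" "t \<ge> a/2" unfolding t_def by simp_all
      have t2: "t < a" unfolding t_def using e(1) a0 by simp
      have "up q t = up (w v) t"
      proof -
        have "fst q y = fst (w v) y" if y: "y > t" for y
        proof (cases "y > a")
          case True
          then have "fst q y = f y" using qx sx unfolding tle_def by simp
          then show ?thesis using True by (simp add: w_def)
        next
          case False
          then have "y \<in> {a-e..a}" using y t1 by simp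
          then have "fst q y = v" using e(3) qv by blast
          moreover have "y > a/2" using y t1 by simp
          ultimately show ?thesis using False by (simp add: w_def)
        qed
        then show ?thesis unfolding up_def by (auto simp: fun_eq_iff)
      qed
      moreover have "t \<in> {snd q..<a}" using t1 t2 e(2) by simp
      moreover have "t \<in> {snd (w v)..<a}" using t1 t2 by (simp add: w_def)
      ultimately have "up q t \<in> C q \<inter> C (w v)" unfolding C_def by (metis IntI imageI)
      then show ?thesis by blast
    qed
    have eq: "D v = \<Union>((\<lambda>q. C q \<union> C (w v)) ` D v)"
      using qC Csub w_D by blast
    show ?thesis
    proof (subst eq, rule connectedin_Union)
      show "connectedin Xtop S" if "S \<in> (\<lambda>q. C q \<union> C (w v)) ` D v" for S
        using that Cconn meet w_D connectedin_Un by blast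
      show "\<Inter>((\<lambda>q. C q \<union> C (w v)) ` D v) \<noteq> {}" using wC by blast
    qed
  qed
  have U_conn: "connectedin Xtop U"
  proof -
    define C where "C (q :: (real \<Rightarrow> 'g) \<times> real) = up q ` {snd q..}" for q
    define R where "R = up x ` {a<..}"
    have Rsub: "R \<subseteq> U"
    proof
      fix r assume "r \<in> R"
      then obtain t where t: "t > a" "r = up x t" unfolding R_def by auto
      have "r \<in> Xspace" using up_in[OF xX] t sx by simp
      moreover have "\<not> tle r x" using t tle_snd sx by fastforce
      ultimately show "r \<in> U" unfolding U_def by blast
    qed
    have Rconn: "connectedin Xtop R" unfolding R_def by (rule conn_up[OF xX]) (auto simp: sx)
    have uR: "up x (a+1) \<in> R" unfolding R_def by simp
    have Csub: "C q \<subseteq> U" if q: "q \<in> U" for q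
    proof
      fix r assume "r \<in> C q"
      then obtain t where t: "t \<ge> snd q" "r = up q t" unfolding C_def by auto
      have qX: "q \<in> Xspace" and qx: "\<not> tle q x" using q unfolding U_def by blast+
      have "r \<in> Xspace" using up_in[OF qX] t by simp
      moreover have "\<not> tle r x" using tle_trans[OF tle_up[OF t(1)]] qx t(2) by blast
      ultimately show "r \<in> U" unfolding U_def by blast
    qed
    have Cconn: "connectedin Xtop (C q)" if q: "q \<in> U" for q
      unfolding C_def by (rule conn_up) (use q in \<open>auto simp: U_def\<close>)
    have qC: "q \<in> C q" if q: "q \<in> U" for q
    proof -
      have "up q (snd q) = q" by (rule up_self) (use q in \<open>auto simp: U_def tle_refl\<close>)
      then show ?thesis unfolding C_def by (metis atLeast_iff imageI order_refl)
    qed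
    have meet: "C q \<inter> R \<noteq> {}" if q: "q \<in> U" for q
    proof -
      have qX: "q \<in> Xspace" using q unfolding U_def by blast
      then obtain bq where bq: "\<forall>y>bq. fst q y = 0" unfolding Xspace_iff by blast
      define B where "B = max (max (snd q) bq) (max bf (a+1))"
      have B: "B \<ge> snd q" "B \<ge> bq" "B \<ge> bf" "B \<ge> a + 1" unfolding B_def by simp_all
      have "up q B = up x B"
      proof -
        have "fst q y = fst x y" if "y > B" for y
          using bq bf(2) B that sx by simp
        then show ?thesis unfolding up_def by (auto simp: fun_eq_iff)
      qed
      moreover have "B \<in> {snd q..}" "B \<in> {a<..}" using B by simp_all
      ultimately have "up q B \<in> C q \<inter> R" unfolding C_def R_def by (metis IntI imageI)
      then show ?thesis by blast
    qed
    have eq: "U = \<Union>((\<lambda>q. C q \<union> R) ` U)"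
      using qC Csub Rsub uU by blast
    show ?thesis
    proof (subst eq, rule connectedin_Union)
      show "connectedin Xtop S" if "S \<in> (\<lambda>q. C q \<union> R) ` U" for S
        using that Cconn meet Rconn connectedin_Un by blast
      show "\<Inter>((\<lambda>q. C q \<union> R) ` U) \<noteq> {}" using uR by blast
    qed
  qed
  let ?T = "subtopology Xtop (Xspace - {x})"
  have FX: "C \<subseteq> Xspace - {x}" if "C \<in> F" for C using cover that by blast
  have Fcases: "C = U \<or> (\<exists>v. C = D v)" if "C \<in> F" for C
    using that unfolding F_def by blast
  have comps: "connected_components_of ?T = F"
  proof (rule components_partition)
    show "connectedin ?T C" if "C \<in> F" for C
    proof -
      have "connectedin Xtop C" using Fcases[OF that] D_conn U_conn by blast
      then show ?thesis using FX[OF that] by (simp add: connectedin_subtopology)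
    qed
    show "openin ?T C" if "C \<in> F" for C
    proof -
      have "openin Xtop C" using Fcases[OF that] D_open U_open by blast
      moreover have "C = C \<inter> (Xspace - {x})" using FX[OF that] by blast
      ultimately show ?thesis unfolding openin_subtopology by blast
    qed
    have "topspace ?T = Xspace \<inter> (Xspace - {x})" by simp
    also have "\<dots> = Xspace - {x}" by blast
    finally show "\<Union>F = topspace ?T" using cover by simp
    show "C \<noteq> {}" if "C \<in> F" for C
    proof -
      from Fcases[OF that] show ?thesis
      proof
        assume "C = U" then show ?thesis using uU by blast
      next
        assume "\<exists>v. C = D v"
        then obtain v where "C = D v" by blast
        then show ?thesis using w_D[of v] by blast
      qed
    qed
    show "C \<inter> C' = {}" if "C \<in> F" "C' \<in> F" "C \<noteq> C'" for C C'
    proof -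
      from Fcases[OF that(1)] Fcases[OF that(2)] that(3)
      consider "C = U" "C' = U" | v where "C = U" "C' = D v" | v where "C = D v" "C' = U"
        | v v' where "C = D v" "C' = D v'" by blast
      then show ?thesis
      proof cases
        case 1 then show ?thesis using that(3) by simp
      next
        case (2 v) then show ?thesis using DU[of v] by blast
      next
        case (3 v) then show ?thesis using DU[of v] by blast
      next
        case (4 v v')
        then have "v \<noteq> v'" using that(3) by blast
        then show ?thesis using DD 4 by simp
      qed
    qed
  qed
  define h :: "'g option \<Rightarrow> ((real \<Rightarrow> 'g) \<times> real) set"
    where "h opt = (case opt of None \<Rightarrow> U | Some v \<Rightarrow> D v)" for opt
  have hN: "h None = U" and hS: "h (Some v) = D v" for v by (simp_all add: h_def)
  have injh: "inj h"
  proof (rule injI)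
    fix o1 o2 assume e: "h o1 = h o2"
    show "o1 = o2"
    proof (cases o1)
      case None
      show ?thesis
      proof (cases o2)
        case (Some v')
        then have "U = D v'" using e None hN hS by simp
        then show ?thesis using w_D[of v'] DU[of v'] by blast
      qed (simp add: None)
    next
      case (Some v)
      show ?thesis
      proof (cases o2)
        case None
        then have "U = D v" using e Some hN hS by simp
        then show ?thesis using w_D[of v] DU[of v] by blast
      next
        case (Some v')
        then have "D v = D v'" using e \<open>o1 = Some v\<close> hS by simp
        then have "v = v'" using w_D[of v] DD[of v v'] by blast
        then show ?thesis using Some \<open>o1 = Some v\<close> by simp
      qed
    qed
  qed
  have rh: "range h = F"
  proof
    show "range h \<subseteq> F"
    proof
      fix C assume "C \<in> range h"
      then obtain opt where "C = h opt" by blast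
      then show "C \<in> F" unfolding F_def by (cases opt) (simp_all add: hN hS)
    qed
    show "F \<subseteq> range h"
    proof
      fix C assume "C \<in> F"
      then have "C = U \<or> (\<exists>v. C = D v)" by (rule Fcases)
      then show "C \<in> range h" using hN hS by (metis rangeI)
    qed
  qed
  have "bij_betw h UNIV F" using injh rh by (simp add: bij_betw_def)
  then have "(UNIV :: 'g option set) \<approx> F" unfolding eqpoll_def by blast
  then show ?thesis using comps by (simp add: eqpoll_sym)
qed

end
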